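(* Let $\nu\in A_2$, $0<p<\infty$, and let $\mathcal D$ be a dyadic system in $\mathbb R^n$. Then $\mathbf B^p_\nu(\mathbb R^n,\mathcal D)\subset\mathrm{VMO}_\nu(\mathbb R^n,\mathcal D)$.
   Context: $A_2$: weights $w$ with $\sup_Q(\frac1{|Q|}\int_Qw)(\frac1{|Q|}\int_Qw^{-1})<\infty$; $w(E)=\int_Ew$. A dyadic system is any $\mathcal D^\omega=\bigcup_k\{2^{-k}([0,1)^n+m+(-1)^k\omega):m\in\mathbb Z^n\}$, $\omega\in\{0,\frac13,\frac23\}^n$. $\|b\|^p_{\mathbf B^p_\nu(\mathbb R^n,\mathcal D)}:=\sum_{Q\in\mathcal D}\big(\frac1{\nu(Q)}\int_Q|b-\langle b\rangle_Q|\big)^p$, $\langle b\rangle_Q$ the average. $\mathrm{BMO}_\nu(\mathbb R^n,\mathcal D)$ is the set of $b\in L^1_{loc}$ with $\sup_{Q\in\mathcal D}\frac1{\nu(Q)}\int_Q|b-\langle b\rangle_Q|<\infty$, and $\mathrm{VMO}_\nu(\mathbb R^n,\mathcal D)$ the set of such $b$ for which $\frac1{\nu(Q)}\int_Q|b-\langle b\rangle_Q|\to0$ uniformly over $Q\in\mathcal D$ as $\ell(Q)\to0$, as $\ell(Q)\to\infty$, and for $Q\subset\mathbb R^n\setminus B(x_0,a)$ as $a\to\infty$ ($x_0$ a fixed point). *)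

theory Defs
  imports "HOL-Analysis.Analysis"
begin

definition cube :: "real^'n \<Rightarrow> real \<Rightarrow> (real^'n) set" where
  "cube a l = cbox a (a + l *\<^sub>R One)"

definition wmeas :: "(real^'n \<Rightarrow> real) \<Rightarrow> (real^'n) set \<Rightarrow> real" where
  "wmeas w E = (LINT x:E|lborel. w x)"

definition avg :: "(real^'n \<Rightarrow> real) \<Rightarrow> (real^'n) set \<Rightarrow> real" where
  "avg f Q = (LINT x:Q|lborel. f x) / measure lborel Q"

definition A2 :: "(real^'n \<Rightarrow> real) \<Rightarrow> bool" where
  "A2 w \<longleftrightarrow> w \<in> borel_measurable lborel \<and> (AE x in lborel. w x > 0) \<and>
     (\<forall>a l. 0 < l \<longrightarrow> set_integrable lborel (cube a l) w
                     \<and> set_integrable lborel (cube a l) (\<lambda>x. inverse (w x))) \<and>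
     (\<exists>C. \<forall>a l. 0 < l \<longrightarrow> avg w (cube a l) * avg (\<lambda>x. inverse (w x)) (cube a l) \<le> C)"

definition L1loc :: "(real^'n \<Rightarrow> real) set" where
  "L1loc = {b. \<forall>K. compact K \<longrightarrow> set_integrable lborel K b}"

definition dyadic_params :: "(real^'n) set" where
  "dyadic_params = {\<omega>. \<forall>i. \<omega> $ i \<in> {0, 1/3, 2/3}}"

definition dcube :: "real^'n \<Rightarrow> int \<Rightarrow> int^'n \<Rightarrow> (real^'n) set" where
  "dcube \<omega> k m = {x. \<forall>i. 2 powr (- real_of_int k) * (real_of_int (m $ i) + (-1) powi k * \<omega> $ i) \<le> x $ i
                        \<and> x $ i < 2 powr (- real_of_int k) * (real_of_int (m $ i) + (-1) powi k * \<omega> $ i + 1)}"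

definition dyadic_system :: "real^'n \<Rightarrow> (real^'n) set set" where
  "dyadic_system \<omega> = {dcube \<omega> k m | k m. True}"

definition wosc :: "(real^'n \<Rightarrow> real) \<Rightarrow> (real^'n \<Rightarrow> real) \<Rightarrow> (real^'n) set \<Rightarrow> real" where
  "wosc \<nu> b Q = (LINT x:Q|lborel. \<bar>b x - avg b Q\<bar>) / wmeas \<nu> Q"

definition Besov :: "(real^'n \<Rightarrow> real) \<Rightarrow> real \<Rightarrow> real^'n \<Rightarrow> (real^'n \<Rightarrow> real) set" where
  "Besov \<nu> p \<omega> = {b \<in> L1loc.
      (\<Sum>\<^sub>\<infinity>Q\<in>dyadic_system \<omega>. ennreal (wosc \<nu> b Q powr p)) < \<infinity>}"

definition BMO :: "(real^'n \<Rightarrow> real) \<Rightarrow> real^'n \<Rightarrow> (real^'n \<Rightarrow> real) set" where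
  "BMO \<nu> \<omega> = {b \<in> L1loc. \<exists>C. \<forall>Q\<in>dyadic_system \<omega>. wosc \<nu> b Q \<le> C}"

text \<open>VMO; side length of dcube omega k m is 2^{-k}; the fixed point x0 is taken to be 0.\<close>
definition VMO :: "(real^'n \<Rightarrow> real) \<Rightarrow> real^'n \<Rightarrow> (real^'n \<Rightarrow> real) set" where
  "VMO \<nu> \<omega> = {b \<in> BMO \<nu> \<omega>.
      (\<forall>\<epsilon>>0. \<exists>\<delta>>0. \<forall>k m. 2 powr (- real_of_int k) < \<delta> \<longrightarrow> wosc \<nu> b (dcube \<omega> k m) < \<epsilon>) \<and>
      (\<forall>\<epsilon>>0. \<exists>R. \<forall>k m. 2 powr (- real_of_int k) > R \<longrightarrow> wosc \<nu> b (dcube \<omega> k m) < \<epsilon>) \<and>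
      (\<forall>\<epsilon>>0. \<exists>a. \<forall>Q\<in>dyadic_system \<omega>. Q \<subseteq> - ball 0 a \<longrightarrow> wosc \<nu> b Q < \<epsilon>)}"

end

theory Submission
  imports Defs
begin

lemma term_le:
  fixes f :: "'a \<Rightarrow> ennreal"
  assumes "F \<subseteq> A"
  shows "infsum f F \<le> infsum f A"
  using assms by (intro infsum_mono_neutral nonneg_summable_on_complete) auto

lemma dcube_corner:
  "(\<chi> i. 2 powr (- real_of_int k) * (real_of_int (m $ i) + (-1) powi k * \<omega> $ i)) \<in> dcube \<omega> k m"
  unfolding dcube_def by auto

lemma box_side_le:
  fixes a b :: "real^'n"
  assumes "s > 0" "{x. \<forall>i. a$i \<le> x$i \<and> x$i < a$i + s} \<subseteq> {x. \<forall>i. b$i \<le> x$i \<and> x$i < b$i + t}"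
  shows "s \<le> t"
proof (rule ccontr)
  assume "\<not> s \<le> t"
  fix i :: 'n
  have "a \<in> {x. \<forall>i. a$i \<le> x$i \<and> x$i < a$i + s}" using assms(1) by auto
  then have ab: "b$i \<le> a$i" "a$i < b$i + t" using assms(2) by auto
  define d where "d = b$i + t - a$i"
  have "d \<ge> 0" "d < s" using ab \<open>\<not> s \<le> t\<close> by (auto simp: d_def)
  then have "(\<chi> j. a$j + d) \<in> {x. \<forall>i. a$i \<le> x$i \<and> x$i < a$i + s}" by auto
  then have "((\<chi> j. a$j + d))$i < b$i + t" using assms(2) by blast
  then show False by (simp add: d_def)
qed

lemma dcube_eq:
  fixes m m' :: "int^'n"
  assumes "dcube \<omega> k m = dcube \<omega> k' m'"
  shows "k = k'"
proof -
  define a where "a = (\<chi> i. 2 powr (- real_of_int k) * (real_of_int (m $ i) + (-1) powi k * \<omega> $ i))"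
  define b where "b = (\<chi> i. 2 powr (- real_of_int k') * (real_of_int (m' $ i) + (-1) powi k' * \<omega> $ i))"
  have A: "dcube \<omega> k m = {x. \<forall>i. a$i \<le> x$i \<and> x$i < a$i + 2 powr (- real_of_int k)}"
    unfolding dcube_def a_def by (auto simp: algebra_simps)
  have B: "dcube \<omega> k' m' = {x. \<forall>i. b$i \<le> x$i \<and> x$i < b$i + 2 powr (- real_of_int k')}"
    unfolding dcube_def b_def by (auto simp: algebra_simps)
  have "2 powr (- real_of_int k) \<le> 2 powr (- real_of_int k')"
    by (rule box_side_le[of _ a b]) (use assms A B in auto)
  moreover have "2 powr (- real_of_int k') \<le> 2 powr (- real_of_int k)"
    by (rule box_side_le[of _ b a]) (use assms A B in auto)
  ultimately have "2 powr (- real_of_int k) = 2 powr (- real_of_int k')" by linarith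
  then show ?thesis using powr_inj[of 2 "- real_of_int k" "- real_of_int k'"] by simp
qed

theorem lemma3p5:
  fixes \<nu> :: "real^'n \<Rightarrow> real" and p :: real and \<omega> :: "real^'n"
  assumes "A2 \<nu>" and "0 < p" and "\<omega> \<in> dyadic_params"
  shows "Besov \<nu> p \<omega> \<subseteq> VMO \<nu> \<omega>"
proof
  fix b assume b: "b \<in> Besov \<nu> p \<omega>"
  define D where "D = dyadic_system \<omega>"
  define f where "f = (\<lambda>Q. ennreal (wosc \<nu> b Q powr p))"
  have L1: "b \<in> L1loc" and fin: "infsum f D < \<infinity>" using b unfolding Besov_def f_def D_def by auto
  have single: "wosc \<nu> b Q \<le> (enn2real (infsum f D)) powr (1/p)" if "Q \<in> D" for Q
  proof (cases "wosc \<nu> b Q \<le> 0")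
    case True then show ?thesis by (meson order_trans powr_ge_zero)
  next
    case False
    have "f Q = infsum f {Q}" by simp
    also have "\<dots> \<le> infsum f D" by (rule term_le) (use that in auto)
    finally have le: "f Q \<le> infsum f D" .
    have "enn2real (f Q) \<le> enn2real (infsum f D)" using le fin by (intro enn2real_mono) (auto simp: top_unique)
    moreover have "enn2real (f Q) = wosc \<nu> b Q powr p" unfolding f_def by simp
    ultimately have "wosc \<nu> b Q powr p \<le> enn2real (infsum f D)" by simp
    then have "(wosc \<nu> b Q powr p) powr (1/p) \<le> (enn2real (infsum f D)) powr (1/p)"
      using assms(2) by (intro powr_mono2) auto
    then show ?thesis using False assms(2) by (simp add: powr_powr)
  qed
  have finF: "finite {Q\<in>D. \<epsilon> \<le> wosc \<nu> b Q}" if "\<epsilon> > 0" for \<epsilon>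
  proof (rule ccontr)
    assume inf: "infinite {Q\<in>D. \<epsilon> \<le> wosc \<nu> b Q}"
    have "infsum f {Q\<in>D. \<epsilon> \<le> wosc \<nu> b Q} = \<infinity>"
    proof (rule infsum_superconst_infinite_ennreal[OF _ _ inf])
      show "0 < ennreal (\<epsilon> powr p)" using that by simp
      fix Q assume "Q \<in> {Q\<in>D. \<epsilon> \<le> wosc \<nu> b Q}"
      then have "\<epsilon> powr p \<le> wosc \<nu> b Q powr p" using that assms(2)
        by (intro powr_mono2) auto
      then show "ennreal (\<epsilon> powr p) \<le> f Q" unfolding f_def by (rule ennreal_leI)
    qed
    moreover have "infsum f {Q\<in>D. \<epsilon> \<le> wosc \<nu> b Q} \<le> infsum f D" by (rule term_le) auto
    ultimately show False using fin by (simp add: top_unique)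
  qed
  have Dk: "dcube \<omega> k m \<in> D" for k m unfolding D_def dyadic_system_def by auto
  have Kfin: "finite {k. \<exists>m. \<epsilon> \<le> wosc \<nu> b (dcube \<omega> k m)}" if "\<epsilon> > 0" for \<epsilon>
  proof -
    let ?F = "{Q\<in>D. \<epsilon> \<le> wosc \<nu> b Q}"
    have "{k. \<exists>m. \<epsilon> \<le> wosc \<nu> b (dcube \<omega> k m)} \<subseteq> (\<Union>Q\<in>?F. {k. \<exists>m. dcube \<omega> k m = Q})"
      using Dk by auto
    moreover have "finite (\<Union>Q\<in>?F. {k. \<exists>m. dcube \<omega> k m = Q})"
    proof (rule finite_UN_I[OF finF[OF that]])
      fix Q
      have "{k. \<exists>m. dcube \<omega> k m = Q} \<subseteq> {SOME k. \<exists>m. dcube \<omega> k m = Q}"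
      proof
        fix k assume "k \<in> {k. \<exists>m. dcube \<omega> k m = Q}"
        then obtain m where m: "dcube \<omega> k m = Q" by auto
        then have "\<exists>m. dcube \<omega> (SOME k. \<exists>m. dcube \<omega> k m = Q) m = Q" by (intro someI_ex[of "\<lambda>k. \<exists>m. dcube \<omega> k m = Q"]) blast
        then show "k \<in> {SOME k. \<exists>m. dcube \<omega> k m = Q}" using m dcube_eq by (metis singletonI)
      qed
      then show "finite {k. \<exists>m. dcube \<omega> k m = Q}" by (rule finite_subset) simp
    qed
    ultimately show ?thesis by (rule finite_subset)
  qed
  show "b \<in> VMO \<nu> \<omega>"
    unfolding VMO_def
  proof (intro CollectI conjI allI impI)
    show "b \<in> BMO \<nu> \<omega>" unfolding BMO_def using L1 single D_def by blast
  next
    fix \<epsilon> :: real assume e: "\<epsilon> > 0"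
    define K where "K = {k. \<exists>m. \<epsilon> \<le> wosc \<nu> b (dcube \<omega> k m)}"
    have "finite K" using Kfin[OF e] K_def by simp
    define \<delta> where "\<delta> = Min (insert 1 ((\<lambda>k. 2 powr (- real_of_int k)) ` K))"
    have "\<delta> > 0" unfolding \<delta>_def using \<open>finite K\<close> by auto
    moreover have "wosc \<nu> b (dcube \<omega> k m) < \<epsilon>" if "2 powr (- real_of_int k) < \<delta>" for k m
    proof (rule ccontr)
      assume "\<not> ?thesis"
      then have "k \<in> K" unfolding K_def by (auto intro!: exI[of _ m])
      then have "\<delta> \<le> 2 powr (- real_of_int k)" unfolding \<delta>_def using \<open>finite K\<close> by auto
      then show False using that by simp
    qed
    ultimately show "\<exists>\<delta>>0. \<forall>k m. 2 powr (- real_of_int k) < \<delta> \<longrightarrow> wosc \<nu> b (dcube \<omega> k m) < \<epsilon>"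
      by blast
  next
    fix \<epsilon> :: real assume e: "\<epsilon> > 0"
    define K where "K = {k. \<exists>m. \<epsilon> \<le> wosc \<nu> b (dcube \<omega> k m)}"
    have "finite K" using Kfin[OF e] K_def by simp
    define R where "R = Max (insert 1 ((\<lambda>k. 2 powr (- real_of_int k)) ` K))"
    have "wosc \<nu> b (dcube \<omega> k m) < \<epsilon>" if "2 powr (- real_of_int k) > R" for k m
    proof (rule ccontr)
      assume "\<not> ?thesis"
      then have "k \<in> K" unfolding K_def by (auto intro!: exI[of _ m])
      then have "R \<ge> 2 powr (- real_of_int k)" unfolding R_def using \<open>finite K\<close> by auto
      then show False using that by simp
    qed
    then show "\<exists>R. \<forall>k m. 2 powr (- real_of_int k) > R \<longrightarrow> wosc \<nu> b (dcube \<omega> k m) < \<epsilon>"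
      by blast
  next
    fix \<epsilon> :: real assume e: "\<epsilon> > 0"
    let ?F = "{Q\<in>D. \<epsilon> \<le> wosc \<nu> b Q}"
    have ne: "Q \<noteq> {}" if "Q \<in> D" for Q
      using that dcube_corner unfolding D_def dyadic_system_def by blast
    define a where "a = 1 + (\<Sum>Q\<in>?F. norm (SOME x. x \<in> Q))"
    have "wosc \<nu> b Q < \<epsilon>" if "Q \<in> D" "Q \<subseteq> - ball 0 a" for Q
    proof (rule ccontr)
      assume "\<not> ?thesis"
      then have QF: "Q \<in> ?F" using that by auto
      have xQ: "(SOME x. x \<in> Q) \<in> Q" using ne[OF that(1)] by (simp add: some_in_eq)
      have "norm (SOME x. x \<in> Q) \<le> (\<Sum>Q\<in>?F. norm (SOME x. x \<in> Q))"
        by (rule member_le_sum[OF QF]) (use finF[OF e] in auto)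
      then have "(SOME x. x \<in> Q) \<in> ball 0 a" unfolding a_def by simp
      then show False using xQ that(2) by auto
    qed
    then show "\<exists>a. \<forall>Q\<in>dyadic_system \<omega>. Q \<subseteq> - ball 0 a \<longrightarrow> wosc \<nu> b Q < \<epsilon>"
      unfolding D_def by blast
  qed
qed

end
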